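(* Let $\Lambda\subset\mathbb Z$ be a finite interval which is the union of three consecutive intervals $\Lambda_l,\Lambda_m,\Lambda_r$ (in this order), and put $\Lambda_1=\Lambda_l\cup\Lambda_m$, $\Lambda_2=\Lambda_m\cup\Lambda_r$. Let $\mathbf D_1\in\mathcal D_{\Lambda_1}$ and $\mathbf D_2\in\mathcal D_{\Lambda_2}$ be VMD tilings. Assume $|\Lambda_m|\ge6$ and that $\boldsymbol\sigma_{\Lambda_1}(\mathbf D_1)$ and $\boldsymbol\sigma_{\Lambda_2}(\mathbf D_2)$ agree on $\Lambda_m$. Then there is a unique VMD tiling $\mathbf D\in\mathcal D_\Lambda$ whose configuration $\boldsymbol\sigma_\Lambda(\mathbf D)$ restricted to $\Lambda_1$ equals $\boldsymbol\sigma_{\Lambda_1}(\mathbf D_1)$ and restricted to $\Lambda_2$ equals $\boldsymbol\sigma_{\Lambda_2}(\mathbf D_2)$.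
   Context: Tilings of a finite interval $\Lambda$: a tile occupies consecutive sites and carries a 0/1 word (its particle content): void $0$; monomer $100$; dimer $011000$; left boundary dimer $11000$ (allowed only as the first tile of $\Lambda$); and, allowed only as the last tile of $\Lambda$: right dimer $011$, right 1-monomer $1$, right 2-monomer $10$, truncated 1-dimer $0110$, truncated 2-dimer $01100$. A root tiling $R$ of $\Lambda$ is a tiling of $\Lambda$ by consecutive tiles consisting of voids and monomers, optionally with a left boundary dimer as first tile and optionally with one of right dimer, right 1-monomer, right 2-monomer as last tile; $\mathcal R_\Lambda$ denotes their set. A VMD tiling derived from $R$ is obtained by choosing a collection of disjoint pairs of consecutive tiles of $R$, each pair being either two monomers (replaced by a dimer) or a monomer followed by a right $j$-monomer, $j\in\{1,2\}$ (replaced by the truncated $j$-dimer); $\mathcal D_\Lambda(R)$ is the set of these and $\mathcal D_\Lambda=\bigcup_{R\in\mathcal R_\Lambda}\mathcal D_\Lambda(R)$. The configuration $\boldsymbol\sigma_\Lambda(\mathbf D)\in\{0,1\}^\Lambda$ of a tiling $\mathbf D$ is the concatenation of the particle contents of its tiles. *)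

theory Defs
  imports Main
begin

text \<open>Tiles. A tile occupies consecutive sites; its particle content is a 0/1 word
  (here: a list of booleans, True = 1).\<close>

datatype tile =
    Void
  | Mono
  | Dimer
  | LDimer
  | RDimer
  | RMono1
  | RMono2
  | TDimer1
  | TDimer2

fun word :: "tile \<Rightarrow> bool list" where
  "word Void = [False]"
| "word Mono = [True, False, False]"
| "word Dimer = [False, True, True, False, False, False]"
| "word LDimer = [True, True, False, False, False]"
| "word RDimer = [False, True, True]"
| "word RMono1 = [True]"
| "word RMono2 = [True, False]"
| "word TDimer1 = [False, True, True, False]"
| "word TDimer2 = [False, True, True, False, False]"

text \<open>Concatenated particle content of a tiling (a tiling is the list of its tiles, left to right).\<close>
definition content :: "tile list \<Rightarrow> bool list" where
  "content D = concat (map word D)"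

definition root_shape :: "tile list \<Rightarrow> bool" where
  "root_shape R \<longleftrightarrow>
     (\<exists>pre mid suf.
        R = pre @ mid @ suf \<and> (pre = [] \<or> pre = [LDimer]) \<and>
        set mid \<subseteq> {Void, Mono} \<and>
        (suf = [] \<or> suf = [RDimer] \<or> suf = [RMono1] \<or> suf = [RMono2]))"

definition root_tilings :: "int \<Rightarrow> int \<Rightarrow> tile list set" where
  "root_tilings x y = {R. root_shape R \<and> int (length (content R)) = y - x}"

inductive derived :: "tile list \<Rightarrow> tile list \<Rightarrow> bool" where
  derived_Nil: "derived [] []"
| derived_keep: "derived R D \<Longrightarrow> derived (t # R) (t # D)"
| derived_dimer: "derived R D \<Longrightarrow> derived (Mono # Mono # R) (Dimer # D)"
| derived_trunc1: "derived R D \<Longrightarrow> derived (Mono # RMono1 # R) (TDimer1 # D)"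
| derived_trunc2: "derived R D \<Longrightarrow> derived (Mono # RMono2 # R) (TDimer2 # D)"

text \<open>The set \<D>_\<Lambda> of VMD tilings of the interval \<Lambda> = {x..<y}.\<close>
definition VMD_tilings :: "int \<Rightarrow> int \<Rightarrow> tile list set" where
  "VMD_tilings x y = {D. \<exists>R \<in> root_tilings x y. derived R D}"

text \<open>Configuration \<sigma>_\<Lambda>(D) of a tiling D of an interval starting at site x:
  value at site i (meaningful for i in the interval).\<close>
definition sigma :: "int \<Rightarrow> tile list \<Rightarrow> int \<Rightarrow> bool" where
  "sigma x D i = content D ! nat (i - x)"

end

theory Submission
  imports Defs
begin

fun okN :: "tile list \<Rightarrow> bool" where
  "okN [] = True"
| "okN (t # D) = (if t \<in> {Void, Mono, Dimer} then okN D
     else (t \<in> {RDimer, RMono1, RMono2, TDimer1, TDimer2} \<and> D = []))"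

definition shp :: "tile list \<Rightarrow> bool" where
  "shp D \<longleftrightarrow> okN D \<or> (\<exists>D'. D = LDimer # D' \<and> okN D')"

lemma content_Nil[simp]: "content [] = []" by (simp add: content_def)
lemma content_Cons[simp]: "content (t # D) = word t @ content D" by (simp add: content_def)
lemma content_append[simp]: "content (A @ B) = content A @ content B" by (simp add: content_def)
lemma word_ne[simp]: "word t \<noteq> []" by (cases t) auto
lemma content_empty: "content D = [] \<Longrightarrow> D = []" by (cases D) auto

lemma no11: "okN D \<Longrightarrow> content D = True # True # w \<Longrightarrow> False"
proof (cases D)
  case (Cons t D')
  assume "okN D" "content D = True # True # w"
  then show False using Cons by (cases t) (auto split: if_splits)
qed simp

lemma okN_False: "okN D \<Longrightarrow> content D = False # w \<Longrightarrow>
   (\<exists>D'. D = Void # D' \<and> okN D' \<and> content D' = w) \<or> (\<exists>w'. w = True # True # w')"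
proof (cases D)
  case (Cons t D')
  assume "okN D" "content D = False # w"
  then show ?thesis using Cons by (cases t) (auto split: if_splits)
qed simp

lemma shp_True: "shp D \<Longrightarrow> content D = True # w \<Longrightarrow> length w \<ge> 2 \<Longrightarrow>
   (\<exists>D'. D = LDimer # D' \<and> okN D' \<and> w = [True,False,False,False] @ content D') \<or>
   (\<exists>D'. D = Mono # D' \<and> okN D' \<and> w = [False,False] @ content D')"
  unfolding shp_def
proof (elim disjE exE conjE)
  assume "okN D" "content D = True # w" "length w \<ge> 2"
  then show ?thesis by (cases D; cases "hd D") (auto split: if_splits)
qed auto

lemma shp_False: "shp D \<Longrightarrow> content D = False # w \<Longrightarrow> okN D"
  unfolding shp_def by auto

lemma pre11: "length v \<ge> 2 \<Longrightarrow> v @ z = True # True # w \<Longrightarrow> \<exists>w'. v = True # True # w'"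
  by (cases v; cases "tl v") auto

lemma split_lem:
  assumes "shp D2" "content D2 = s @ v' @ z" "okN D1'" "content D1' = v'"
    "length s + length v' \<ge> 6"
    "s \<in> {[False],[False,False],[False,False,False],[True,False,False,False],[True,True,False,False,False]}"
  shows "\<exists>D''. okN D'' \<and> content D'' = v' @ z"
proof -
  have bad: "v' @ z = True # True # w \<Longrightarrow> length v' \<ge> 2 \<Longrightarrow> False" for w
    using pre11 no11 assms(3,4) by blast
  show ?thesis
  using assms(6) proof (elim insertE)
    assume s: "s = [False]"
    then have o: "okN D2" using assms shp_False by auto
    from okN_False[OF o] s assms(2) bad assms(5) show ?thesis by auto
  next
    assume s: "s = [False, False]"
    then have o: "okN D2" using assms shp_False by auto
    from okN_False[OF o] s assms(2) bad assms(5) obtain D' where "okN D'" "content D' = False # v' @ z"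
      by fastforce
    from okN_False[OF this] bad assms(5) s show ?thesis by auto
  next
    assume s: "s = [False, False, False]"
    then have o: "okN D2" using assms shp_False by auto
    from okN_False[OF o] s assms(2) bad assms(5) obtain D' where "okN D'" "content D' = False # False # v' @ z"
      by fastforce
    from okN_False[OF this] bad assms(5) s obtain D'' where "okN D''" "content D'' = False # v' @ z"
      by fastforce
    from okN_False[OF this] bad assms(5) s show ?thesis by auto
  next
    assume s: "s = [True, False, False, False]"
    from shp_True[OF assms(1)] s assms(2) obtain D' where "okN D'" "content D' = False # v' @ z"
      by fastforce
    from okN_False[OF this] bad assms(5) s show ?thesis by auto
  next
    assume s: "s = [True, True, False, False, False]"
    from shp_True[OF assms(1)] s assms(2) show ?thesis by fastforce
  qed auto
qed

lemma s_cases: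
  assumes "t \<in> {Mono, Dimer, LDimer}" "0 < k" "k < length (word t)"
  shows "drop k (word t) \<in> {[False],[False,False],[False,False,False],[True,False,False,False],[True,True,False,False,False]}"
proof -
  consider "t = Mono" | "t = Dimer" | "t = LDimer" using assms by auto
  then show ?thesis
  proof cases
    case 1
    then have "k = 1 \<or> k = 2" using assms by (simp, arith)
    then show ?thesis using 1 by auto
  next
    case 2
    then have "k = 1 \<or> k = 2 \<or> k = 3 \<or> k = 4 \<or> k = 5" using assms by (simp, arith)
    then show ?thesis using 2 by auto
  next
    case 3
    then have "k = 1 \<or> k = 2 \<or> k = 3 \<or> k = 4" using assms by (simp, arith)
    then show ?thesis using 3 by auto
  qed
qed

lemma straddle:
  assumes "t \<in> {Mono, Dimer, LDimer}" "okN D1'" "word t @ content D1' = u @ v"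
    "0 < length u" "length u < length (word t)"
    "shp D2" "content D2 = v @ z" "6 \<le> length v"
  shows "\<exists>D''. okN D'' \<and> word t @ content D'' = u @ v @ z"
proof -
  define s where "s = drop (length u) (word t)"
  have wt: "word t = u @ s" using assms(3,5) unfolding s_def
    by (metis append_eq_append_conv_if append_take_drop_id less_imp_le_nat)
  have v: "v = s @ content D1'" using assms(3) wt by simp
  have sin: "s \<in> {[False],[False,False],[False,False,False],[True,False,False,False],[True,True,False,False,False]}"
    using s_cases assms unfolding s_def by blast
  obtain D'' where "okN D''" "content D'' = content D1' @ z"
    using split_lem[OF assms(6) _ assms(2) refl _ sin] assms(7,8) v by auto
  then show ?thesis using wt v by auto
qed

lemma glueN: "okN D1 \<Longrightarrow> content D1 = u @ v \<Longrightarrow> shp D2 \<Longrightarrow> content D2 = v @ z \<Longrightarrow> 6 \<le> length v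
   \<Longrightarrow> \<exists>D. okN D \<and> content D = u @ v @ z"
proof (induction D1 arbitrary: u)
  case Nil
  then show ?case by simp
next
  case (Cons t D1')
  show ?case
  proof (cases "u = []")
    case True
    have "okN D2"
    proof (rule ccontr)
      assume "\<not> okN D2"
      then obtain D' where "D2 = LDimer # D'" using Cons.prems(3) shp_def by auto
      then have "content (t # D1') = True # True # (drop 2 v)"
        using Cons.prems True by (cases v; cases "tl v") auto
      then show False using no11 Cons.prems(1) by blast
    qed
    then show ?thesis using True Cons.prems by auto
  next
    case False
    show ?thesis
    proof (cases "length (word t) \<le> length u")
      case True
      define u' where "u' = drop (length (word t)) u"
      have h: "word t = take (length (word t)) u \<and> content D1' = u' @ v"
        using Cons.prems(2) True unfolding u'_def by (auto simp: append_eq_append_conv_if)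
      then have u: "u = word t @ u'" and c: "content D1' = u' @ v" unfolding u'_def
        by (metis append_take_drop_id)+
      have mid: "t \<in> {Void, Mono, Dimer}"
      proof (rule ccontr)
        assume "t \<notin> {Void, Mono, Dimer}"
        then have "D1' = []" using Cons.prems(1) by (auto split: if_splits)
        then show False using c Cons.prems(5) by simp
      qed
      then have "okN D1'" using Cons.prems(1) by simp
      from Cons.IH[OF this c Cons.prems(3,4,5)] obtain D' where "okN D'" "content D' = u' @ v @ z"
        by blast
      then show ?thesis using mid u by (intro exI[of _ "t # D'"]) auto
    next
      case lt: False
      have mid: "t \<in> {Void, Mono, Dimer}"
      proof (rule ccontr)
        assume "t \<notin> {Void, Mono, Dimer}"
        then have "D1' = []" and "length (word t) < 6" using Cons.prems(1) by (auto split: if_splits)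
        then show False using Cons.prems(2,5) by (metis content_Cons content_Nil append_Nil2 length_append
          le_add2 order.strict_trans2 not_le)
      qed
      have "t \<noteq> Void" using lt False by (cases u) auto
      with mid have t: "t \<in> {Mono, Dimer, LDimer}" by auto
      have "okN D1'" using Cons.prems(1) mid by simp
      from straddle[OF t this _ _ _ Cons.prems(3,4,5)] Cons.prems(2) False lt
      obtain D'' where "okN D''" "word t @ content D'' = u @ v @ z" by auto
      then show ?thesis using mid by (intro exI[of _ "t # D''"]) auto
    qed
  qed
qed

lemma glue:
  assumes "shp D1" "content D1 = u @ v" "shp D2" "content D2 = v @ z" "6 \<le> length v"
  shows "\<exists>D. shp D \<and> content D = u @ v @ z"
proof (cases "okN D1")
  case True
  then show ?thesis using glueN[OF True assms(2-5)] shp_def by auto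
next
  case False
  then obtain D1' where D1: "D1 = LDimer # D1'" "okN D1'" using assms(1) shp_def by auto
  show ?thesis
  proof (cases "u = []")
    case True
    then show ?thesis using assms by auto
  next
    case un: False
    show ?thesis
    proof (cases "length (word LDimer) \<le> length u")
      case True
      define u' where "u' = drop (length (word LDimer)) u"
      have h: "word LDimer = take (length (word LDimer)) u \<and> content D1' = u' @ v"
      proof -
        have e: "word LDimer @ content D1' = u @ v" using assms(2) D1 by simp
        show ?thesis using e True unfolding u'_def append_eq_append_conv_if by presburger
      qed
      then have u: "u = word LDimer @ u'" and c: "content D1' = u' @ v" unfolding u'_def
        by (metis append_take_drop_id)+
      from glueN[OF D1(2) c assms(3,4,5)] obtain D' where "okN D'" "content D' = u' @ v @ z"
        by blast
      then show ?thesis using u by (intro exI[of _ "LDimer # D'"]) (auto simp: shp_def)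
    next
      case False
      from straddle[of LDimer, OF _ D1(2) _ _ _ assms(3,4,5)] assms(2) D1 False un
      obtain D'' where "okN D''" "word LDimer @ content D'' = u @ v @ z" by auto
      then show ?thesis by (intro exI[of _ "LDimer # D''"]) (auto simp: shp_def)
    qed
  qed
qed



lemma derived_Nil_inv: "derived [] D \<Longrightarrow> D = []"
  by (auto elim: derived.cases)

lemma derived_len: "derived R D \<Longrightarrow> length (content R) = length (content D)"
  by (induction rule: derived.induct) auto

lemma derived_okN: "derived R D \<Longrightarrow> okN R \<Longrightarrow> okN D"
proof (induction rule: derived.induct)
  case (derived_keep R D t)
  then show ?case by (auto split: if_splits dest: derived_Nil_inv)
next
  case (derived_trunc1 R D)
  then show ?case by (auto dest: derived_Nil_inv)
next
  case (derived_trunc2 R D)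
  then show ?case by (auto dest: derived_Nil_inv)
qed auto

lemma derived_LDimer: "derived (LDimer # R) D \<Longrightarrow> \<exists>D'. D = LDimer # D' \<and> derived R D'"
  by (cases rule: derived.cases) auto

lemma okN_mid: "set mid \<subseteq> {Void, Mono} \<Longrightarrow> okN suf \<Longrightarrow> okN (mid @ suf)"
  by (induction mid) auto

lemma root_shp: "root_shape R \<Longrightarrow> shp R"
proof -
  assume "root_shape R"
  then obtain pre mid suf where R: "R = pre @ mid @ suf" "pre = [] \<or> pre = [LDimer]"
    "set mid \<subseteq> {Void, Mono}" "suf = [] \<or> suf = [RDimer] \<or> suf = [RMono1] \<or> suf = [RMono2]"
    unfolding root_shape_def by blast
  have "okN suf" using R(4) by auto
  then have "okN (mid @ suf)" using okN_mid R(3) by blast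
  then show ?thesis using R(1,2) unfolding shp_def by auto
qed

lemma derived_shp: "derived R D \<Longrightarrow> shp R \<Longrightarrow> shp D"
  unfolding shp_def using derived_okN derived_LDimer by blast

fun ex :: "tile \<Rightarrow> tile list" where
  "ex Dimer = [Mono, Mono]"
| "ex TDimer1 = [Mono, RMono1]"
| "ex TDimer2 = [Mono, RMono2]"
| "ex t = [t]"

lemma ex_derived: "derived (concat (map ex D)) D"
proof (induction D)
  case Nil then show ?case by (simp add: derived_Nil)
next
  case (Cons t D) then show ?case
    by (cases t) (simp_all add: derived_keep derived_dimer derived_trunc1 derived_trunc2)
qed

lemma ex_len: "length (content (concat (map ex D))) = length (content D)"
proof (induction D)
  case (Cons t D) then show ?case by (cases t) auto
qed simp

lemma ex_okN: "okN D \<Longrightarrow> \<exists>mid suf. concat (map ex D) = mid @ suf \<and> set mid \<subseteq> {Void, Mono} \<and>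
        (suf = [] \<or> suf = [RDimer] \<or> suf = [RMono1] \<or> suf = [RMono2])"
proof (induction D)
  case Nil then show ?case by auto
next
  case (Cons t D)
  show ?case
  proof (cases "t \<in> {Void, Mono, Dimer}")
    case True
    then obtain mid suf where "concat (map ex D) = mid @ suf" "set mid \<subseteq> {Void, Mono}"
        "(suf = [] \<or> suf = [RDimer] \<or> suf = [RMono1] \<or> suf = [RMono2])"
      using Cons by auto
    then show ?thesis using True
      by (intro exI[of _ "ex t @ mid"] exI[of _ suf]) auto
  next
    case False
    then have "D = []" "t \<in> {RDimer, RMono1, RMono2, TDimer1, TDimer2}" using Cons.prems by auto
    then consider "t = RDimer" | "t = RMono1" | "t = RMono2" | "t = TDimer1" | "t = TDimer2"
      by blast
    then show ?thesis
    proof cases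
      case 1 then show ?thesis using \<open>D = []\<close> by (intro exI[of _ "[]"] exI[of _ "[RDimer]"]) simp
    next
      case 2 then show ?thesis using \<open>D = []\<close> by (intro exI[of _ "[]"] exI[of _ "[RMono1]"]) simp
    next
      case 3 then show ?thesis using \<open>D = []\<close> by (intro exI[of _ "[]"] exI[of _ "[RMono2]"]) simp
    next
      case 4 then show ?thesis using \<open>D = []\<close> by (intro exI[of _ "[Mono]"] exI[of _ "[RMono1]"]) simp
    next
      case 5 then show ?thesis using \<open>D = []\<close> by (intro exI[of _ "[Mono]"] exI[of _ "[RMono2]"]) simp
    qed
  qed
qed

lemma VMD_char: "VMD_tilings x y = {D. shp D \<and> int (length (content D)) = y - x}"
proof safe
  fix D assume "D \<in> VMD_tilings x y"
  then obtain R where "root_shape R" "int (length (content R)) = y - x" "derived R D"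
    unfolding VMD_tilings_def root_tilings_def by auto
  then show "shp D" "int (length (content D)) = y - x"
    using root_shp derived_shp derived_len by auto
next
  fix D assume D: "shp D" "int (length (content D)) = y - x"
  have "root_shape (concat (map ex D))"
  proof (cases "okN D")
    case True
    obtain mid suf where m: "concat (map ex D) = mid @ suf" "set mid \<subseteq> {Void, Mono}"
        "(suf = [] \<or> suf = [RDimer] \<or> suf = [RMono1] \<or> suf = [RMono2])"
      using ex_okN[OF True] by blast
    show ?thesis unfolding root_shape_def
      by (rule exI[of _ "[]"], rule exI[of _ mid], rule exI[of _ suf]) (use m in simp)
  next
    case False
    then obtain D' where "D = LDimer # D'" "okN D'" using D shp_def by auto
    then obtain mid suf where m: "concat (map ex D) = [LDimer] @ mid @ suf" "set mid \<subseteq> {Void, Mono}"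
        "(suf = [] \<or> suf = [RDimer] \<or> suf = [RMono1] \<or> suf = [RMono2])"
      using ex_okN[of D'] by auto
    show ?thesis unfolding root_shape_def
      by (rule exI[of _ "[LDimer]"], rule exI[of _ mid], rule exI[of _ suf]) (use m in simp)
  qed
  then show "D \<in> VMD_tilings x y"
    unfolding VMD_tilings_def root_tilings_def using ex_derived ex_len D by auto
qed

lemma no11': "okN D \<Longrightarrow> content D = True # True # w \<Longrightarrow> P"
  using no11 by blast

lemma hd_eq: "okN (t#D) \<Longrightarrow> okN (t'#D') \<Longrightarrow> word t @ content D = word t' @ content D' \<Longrightarrow> t = t'"
  apply (cases t; cases t'; simp_all)
  apply (erule no11', assumption)+
  apply (erule no11'[of D'], rule sym, assumption)+
  done

lemma okN_inj: "okN D \<Longrightarrow> okN D' \<Longrightarrow> content D = content D' \<Longrightarrow> D = D'"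
proof (induction D arbitrary: D')
  case Nil
  then have "content D' = []" by simp
  from content_empty[OF this] show ?case by simp
next
  case (Cons t D)
  show ?case
  proof (cases D')
    case Nil then show ?thesis using Cons.prems by simp
  next
    case (Cons t' D0)
    have o2: "okN (t' # D0)" using Cons.prems(2) Cons by simp
    have e: "word t @ content D = word t' @ content D0" using Cons.prems(3) Cons by simp
    have tt: "t = t'" by (rule hd_eq[OF Cons.prems(1) o2 e])
    then have "content D = content D0" using e by simp
    moreover have "okN D" using Cons.prems(1) by (simp split: if_splits)
    moreover have "okN D0" using o2 by (simp split: if_splits)
    ultimately have "D = D0" using Cons.IH by blast
    then show ?thesis using tt Cons by simp
  qed
qed

lemma shp_inj: "shp D \<Longrightarrow> shp D' \<Longrightarrow> content D = content D' \<Longrightarrow> D = D'"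
  unfolding shp_def
proof (elim disjE exE conjE)
  assume "okN D" "okN D'" "content D = content D'" then show ?thesis by (rule okN_inj)
next
  fix X assume "okN D" "D' = LDimer # X" "content D = content D'"
  then show ?thesis using no11 by simp blast
next
  fix X assume "okN D'" "D = LDimer # X" "content D = content D'"
  then show ?thesis using no11 by simp (metis)
next
  fix X Y assume "D = LDimer # X" "okN X" "D' = LDimer # Y" "okN Y" "content D = content D'"
  then show ?thesis using okN_inj by simp
qed

theorem lemma2p3:
  fixes a b c d :: int and D1 D2 :: "tile list"
  assumes "a \<le> b" and "b \<le> c" and "c \<le> d"
    and "c - b \<ge> 6"
    and "D1 \<in> VMD_tilings a c"
    and "D2 \<in> VMD_tilings b d"
    and "\<forall>i \<in> {b..<c}. sigma a D1 i = sigma b D2 i"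
  shows "\<exists>!D. D \<in> VMD_tilings a d \<and>
              (\<forall>i \<in> {a..<c}. sigma a D i = sigma a D1 i) \<and>
              (\<forall>i \<in> {b..<d}. sigma a D i = sigma b D2 i)"
proof -
  define w1 where "w1 = content D1"
  define w2 where "w2 = content D2"
  have s1: "shp D1" and l1: "int (length w1) = c - a"
    using assms(5) unfolding VMD_char w1_def by auto
  have s2: "shp D2" and l2: "int (length w2) = d - b"
    using assms(6) unfolding VMD_char w2_def by auto
  define p where "p = nat (b - a)"
  define q where "q = nat (c - b)"
  define u where "u = take p w1"
  define v where "v = drop p w1"
  define z where "z = drop q w2"
  have w1: "w1 = u @ v" unfolding u_def v_def by simp
  have lv: "length v = q" unfolding v_def q_def p_def using l1 assms(1,2) by simp
  have lu: "length u = p" unfolding u_def p_def using l1 assms(1,2) by simp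
  have lw2: "q \<le> length w2" unfolding q_def using l2 assms(3) by simp
  have vt: "v = take q w2"
  proof (rule nth_equalityI)
    show "length v = length (take q w2)" using lv lw2 by simp
  next
    fix j assume "j < length v"
    then have j: "j < q" using lv by simp
    define i where "i = b + int j"
    have "i \<in> {b..<c}" unfolding i_def using j q_def by auto
    then have "sigma a D1 i = sigma b D2 i" using assms(7) by blast
    moreover have "nat (i - a) = p + j" unfolding i_def p_def using assms(1) by simp
    moreover have "nat (i - b) = j" unfolding i_def by simp
    ultimately have "w1 ! (p + j) = w2 ! j" unfolding sigma_def w1_def w2_def by simp
    then show "v ! j = take q w2 ! j" using j lu w1 nth_append_length_plus[of u v j]
      by simp
  qed
  have w2: "w2 = v @ z" unfolding z_def vt by simp
  have "6 \<le> length v" using lv q_def assms(4) by simp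
  from glue[OF s1 w1[unfolded w1_def] s2 w2[unfolded w2_def] this]
  obtain D where D: "shp D" "content D = u @ v @ z" by blast
  have lD: "int (length (content D)) = d - a"
    using D(2) w2 lu l2 p_def assms(1) by simp
  have P1: "\<forall>i \<in> {a..<c}. sigma a D i = sigma a D1 i"
  proof
    fix i assume i: "i \<in> {a..<c}"
    then have "nat (i - a) < length (u @ v)" using l1 w1 by auto
    then have "((u @ v) @ z) ! nat (i - a) = (u @ v) ! nat (i - a)"
      using nth_append[of "u @ v" z "nat (i - a)"] by simp
    then show "sigma a D i = sigma a D1 i" unfolding sigma_def D(2) w1_def[symmetric] w1
      by simp
  qed
  have P2: "\<forall>i \<in> {b..<d}. sigma a D i = sigma b D2 i"
  proof
    fix i assume i: "i \<in> {b..<d}"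
    then have "nat (i - a) = p + nat (i - b)" using p_def assms(1) by auto
    then show "sigma a D i = sigma b D2 i" unfolding sigma_def D(2) w2_def[symmetric] w2
      using lu by (simp add: nth_append)
  qed
  have ex: "D \<in> VMD_tilings a d" using D(1) lD unfolding VMD_char by simp
  show ?thesis
  proof (rule ex_ex1I)
    show "\<exists>D. D \<in> VMD_tilings a d \<and>
              (\<forall>i \<in> {a..<c}. sigma a D i = sigma a D1 i) \<and>
              (\<forall>i \<in> {b..<d}. sigma a D i = sigma b D2 i)" using ex P1 P2 by blast
  next
    fix X Y assume X: "X \<in> VMD_tilings a d \<and>
              (\<forall>i \<in> {a..<c}. sigma a X i = sigma a D1 i) \<and>
              (\<forall>i \<in> {b..<d}. sigma a X i = sigma b D2 i)"
      and Y: "Y \<in> VMD_tilings a d \<and>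
              (\<forall>i \<in> {a..<c}. sigma a Y i = sigma a D1 i) \<and>
              (\<forall>i \<in> {b..<d}. sigma a Y i = sigma b D2 i)"
    have sX: "shp X" "int (length (content X)) = d - a" using X unfolding VMD_char by auto
    have sY: "shp Y" "int (length (content Y)) = d - a" using Y unfolding VMD_char by auto
    have "content X = content Y"
    proof (rule nth_equalityI)
      show "length (content X) = length (content Y)" using sX sY by simp
    next
      fix j assume j: "j < length (content X)"
      define i where "i = a + int j"
      have ji: "nat (i - a) = j" unfolding i_def by simp
      have "sigma a X i = sigma a Y i"
      proof (cases "i < c")
        case True
        then have "i \<in> {a..<c}" unfolding i_def by simp
        then show ?thesis using X Y by metis
      next
        case False
        then have "i \<in> {b..<d}" unfolding i_def using j sX assms(2) by auto
        then show ?thesis using X Y by metis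
      qed
      then show "content X ! j = content Y ! j" unfolding sigma_def ji .
    qed
    then show "X = Y" using shp_inj sX sY by blast
  qed
qed

end
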